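(* Let $(X,\rho)$ be a metric space and let $(A_k)\subset CL(X)$. Then for every unbounded modulus $f\colon[0,\infty)\to[0,\infty)$, the $f$-Wijsman statistical limit of $(A_k)$ is unique if it exists; i.e., if $(A_k)$ is $f$-Wijsman statistically convergent to $A\in CL(X)$ and to $B\in CL(X)$, then $A=B$.
   Context: A modulus is a function $f\colon[0,\infty)\to[0,\infty)$ such that $f(x)=0$ iff $x=0$, $f$ is subadditive, increasing and continuous. $CL(X)$ denotes the set of all non-empty closed subsets of $(X,\rho)$, and $d(x,B)=\inf_{y\in B}\rho(x,y)$. For an unbounded modulus $f$ and $K\subseteq\mathbb N$, the $f$-density is $d^f(K)=\lim_{n\to\infty}\frac{f(|\{k\le n:k\in K\}|)}{f(n)}$ (when the limit exists). A real sequence $(x_k)$ is $f$-statistically convergent to $l$ if for every $\varepsilon>0$ the set $\{k:|x_k-l|\ge\varepsilon\}$ has $f$-density $0$. $(A_k)\subset CL(X)$ is $f$-Wijsman statistically convergent to $A\in CL(X)$ if for every $x\in X$ the sequence $(d(x,A_k))$ is $f$-statistically convergent to $d(x,A)$. *)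

theory Defs
  imports "HOL-Analysis.Analysis"
begin

definition modulus :: "(real \<Rightarrow> real) \<Rightarrow> bool" where
  "modulus f \<longleftrightarrow>
     (\<forall>x\<ge>0. f x \<ge> 0) \<and>
     (\<forall>x\<ge>0. f x = 0 \<longleftrightarrow> x = 0) \<and>
     (\<forall>x\<ge>0. \<forall>y\<ge>0. f (x + y) \<le> f x + f y) \<and>
     (\<forall>x\<ge>0. \<forall>y\<ge>0. x \<le> y \<longrightarrow> f x \<le> f y) \<and>
     continuous_on {0..} f"

definition unbounded_modulus :: "(real \<Rightarrow> real) \<Rightarrow> bool" where
  "unbounded_modulus f \<longleftrightarrow> modulus f \<and> \<not> bdd_above (f ` {0..})"

definition f_density_zero :: "(real \<Rightarrow> real) \<Rightarrow> nat set \<Rightarrow> bool" where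
  "f_density_zero f K \<longleftrightarrow>
     ((\<lambda>n. f (real (card {k. k \<le> n \<and> k \<in> K})) / f (real n)) \<longlonglongrightarrow> 0)"

definition f_stat_conv :: "(real \<Rightarrow> real) \<Rightarrow> (nat \<Rightarrow> real) \<Rightarrow> real \<Rightarrow> bool" where
  "f_stat_conv f x l \<longleftrightarrow> (\<forall>\<epsilon>>0. f_density_zero f {k. \<bar>x k - l\<bar> \<ge> \<epsilon>})"

definition CL :: "'a::metric_space set set" where
  "CL = {A. closed A \<and> A \<noteq> {}}"

definition f_wijsman_stat_conv ::
  "(real \<Rightarrow> real) \<Rightarrow> (nat \<Rightarrow> 'a::metric_space set) \<Rightarrow> 'a set \<Rightarrow> bool" where
  "f_wijsman_stat_conv f As A \<longleftrightarrow> (\<forall>x. f_stat_conv f (\<lambda>k. infdist x (As k)) (infdist x A))"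

end

theory Submission
  imports Defs
begin

lemma halves_aux:
  fixes a b c :: real
  shows "a \<le> b + c \<Longrightarrow> b < a / 2 \<Longrightarrow> c < a / 2 \<Longrightarrow> False"
  by linarith

lemma no_cover:
  assumes m: "modulus f" and U: "K1 \<union> K2 = UNIV"
    and d1: "f_density_zero f K1" and d2: "f_density_zero f K2"
  shows False
proof -
  define c1 where "c1 n = card {k. k \<le> n \<and> k \<in> K1}" for n
  define c2 where "c2 n = card {k. k \<le> n \<and> k \<in> K2}" for n
  have nn: "\<And>x. x \<ge> 0 \<Longrightarrow> f x \<ge> 0" and z: "\<And>x. x \<ge> 0 \<Longrightarrow> f x = 0 \<longleftrightarrow> x = 0"
    and sa: "\<And>x y. x \<ge> 0 \<Longrightarrow> y \<ge> 0 \<Longrightarrow> f (x + y) \<le> f x + f y"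
    and mo: "\<And>x y. x \<ge> 0 \<Longrightarrow> y \<ge> 0 \<Longrightarrow> x \<le> y \<Longrightarrow> f x \<le> f y"
    using m unfolding modulus_def by auto
  have lim: "(\<lambda>n. f (real (c1 n)) / f (real n) + f (real (c2 n)) / f (real n)) \<longlonglongrightarrow> 0"
    using tendsto_add[OF d1[unfolded f_density_zero_def] d2[unfolded f_density_zero_def]]
    unfolding c1_def c2_def by simp
  then have "eventually (\<lambda>n. \<bar>f (real (c1 n)) / f (real n) + f (real (c2 n)) / f (real n)\<bar> < 1/2) sequentially"
    by (metis (no_types, lifting) LIMSEQ_iff diff_zero half_gt_zero real_norm_def zero_less_one eventually_sequentially)
  then obtain N where N: "\<And>n. n \<ge> N \<Longrightarrow> \<bar>f (real (c1 n)) / f (real n) + f (real (c2 n)) / f (real n)\<bar> < 1/2"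
    by (auto simp: eventually_sequentially)
  define n where "n = Suc N"
  have card: "n + 1 \<le> c1 n + c2 n"
  proof -
    have "{k. k \<le> n} = {k. k \<le> n \<and> k \<in> K1} \<union> {k. k \<le> n \<and> k \<in> K2}" using U by auto
    then have "card {k. k \<le> n} \<le> c1 n + c2 n" unfolding c1_def c2_def by (metis card_Un_le)
    moreover have "card {k. k \<le> n} = n + 1" by (simp add: atMost_def[symmetric])
    ultimately show ?thesis by simp
  qed
  have fpos: "f (real n) > 0" using nn[of "real n"] z[of "real n"] n_def by fastforce
  have "f (real n) \<le> f (real (c1 n) + real (c2 n))"
    using card by (intro mo) auto
  also have "\<dots> \<le> f (real (c1 n)) + f (real (c2 n))" by (intro sa) auto
  finally have "1 \<le> (f (real (c1 n)) + f (real (c2 n))) / f (real n)" using fpos by simp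
  then have "1 \<le> f (real (c1 n)) / f (real n) + f (real (c2 n)) / f (real n)"
    by (simp add: add_divide_distrib)
  moreover have "\<bar>f (real (c1 n)) / f (real n) + f (real (c2 n)) / f (real n)\<bar> < 1/2"
    by (rule N) (simp add: n_def)
  ultimately show False by linarith
qed

theorem corollary2p4:
  fixes f :: "real \<Rightarrow> real" and As :: "nat \<Rightarrow> 'a::metric_space set" and A B :: "'a set"
  assumes "unbounded_modulus f"
    and "\<forall>k. As k \<in> CL"
    and "A \<in> CL" and "B \<in> CL"
    and "f_wijsman_stat_conv f As A"
    and "f_wijsman_stat_conv f As B"
  shows "A = B"
proof -
  have m: "modulus f" using assms(1) unfolding unbounded_modulus_def by simp
  have eq: "infdist x A = infdist x B" for x
  proof (rule ccontr)
    assume ne: "infdist x A \<noteq> infdist x B"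
    define e where "e = \<bar>infdist x A - infdist x B\<bar> / 2"
    have e: "e > 0" using ne unfolding e_def by simp
    have d1: "f_density_zero f {k. \<bar>infdist x (As k) - infdist x A\<bar> \<ge> e}"
      using assms(5) e unfolding f_wijsman_stat_conv_def f_stat_conv_def by blast
    have d2: "f_density_zero f {k. \<bar>infdist x (As k) - infdist x B\<bar> \<ge> e}"
      using assms(6) e unfolding f_wijsman_stat_conv_def f_stat_conv_def by blast
    have all: "\<bar>infdist x (As k) - infdist x A\<bar> \<ge> e \<or> \<bar>infdist x (As k) - infdist x B\<bar> \<ge> e" for k
    proof (rule ccontr)
      assume "\<not> ?thesis"
      then have h: "\<bar>infdist x (As k) - infdist x A\<bar> < e" "\<bar>infdist x (As k) - infdist x B\<bar> < e" by auto
      have "\<bar>infdist x A - infdist x B\<bar> \<le> \<bar>infdist x (As k) - infdist x A\<bar> + \<bar>infdist x (As k) - infdist x B\<bar>"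
        by linarith
      from halves_aux[OF this h[unfolded e_def]] show False .
    qed
    have U: "{k. \<bar>infdist x (As k) - infdist x A\<bar> \<ge> e} \<union> {k. \<bar>infdist x (As k) - infdist x B\<bar> \<ge> e} = UNIV"
      using all by blast
    show False using no_cover[OF m U d1 d2] .
  qed
  have cA: "closed A" "A \<noteq> {}" and cB: "closed B" "B \<noteq> {}" using assms(3,4) unfolding CL_def by auto
  show ?thesis
  proof (intro set_eqI)
    fix y
    show "y \<in> A \<longleftrightarrow> y \<in> B"
      using eq[of y] in_closed_iff_infdist_zero[OF cA, of y] in_closed_iff_infdist_zero[OF cB, of y] by simp
  qed
qed

end
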